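(* Let $\kappa\ge2$ and let $\psi^+$ be a rooted caterpillar tree on $n\ge1$ taxa. Then the dimension of the $\mathrm{UE}_\kappa(\psi^+)$ model (i.e., of its affine closure) is $$d_\kappa(\psi^+)=\frac{\kappa^n+\kappa}{2}-1.$$
   Context: For a rooted binary topological tree $\psi^+$ on $X$, $d_\kappa(\psi^+)$ is the dimension of the affine space of real $|X|$-way $\kappa\times\cdots\times\kappa$ tensors $P$ (one index per taxon) whose entries sum to 1 and such that for every $Y\subseteq X$ and every 2-clade $\{a,b\}$ of the induced rooted subtree $\psi^+|_Y$, the marginalization $P_Y$ is invariant under exchanging the $a$ and $b$ indices. A 2-clade is a pair of leaves that are exactly the leaf descendants of some vertex. A rooted caterpillar on $n$ taxa is a rooted binary tree in which every internal vertex has at least one leaf child (i.e., of the form $(x_1,(x_2,(\dots,(x_{n-1},x_n))))$). *)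

theory Defs
  imports "HOL-Analysis.Analysis" "HOL-Library.Function_Algebras"
begin

datatype 'a rtree = Leaf 'a | Node "'a rtree" "'a rtree"

fun leaves_list :: "'a rtree \<Rightarrow> 'a list" where
  "leaves_list (Leaf x) = [x]"
| "leaves_list (Node l r) = leaves_list l @ leaves_list r"

definition leaves :: "'a rtree \<Rightarrow> 'a set" where
  "leaves T = set (leaves_list T)"

definition valid_tree :: "'a rtree \<Rightarrow> bool" where
  "valid_tree T = distinct (leaves_list T)"

fun is_leaf :: "'a rtree \<Rightarrow> bool" where
  "is_leaf (Leaf x) = True"
| "is_leaf (Node l r) = False"

fun caterpillar :: "'a rtree \<Rightarrow> bool" where
  "caterpillar (Leaf x) = True"
| "caterpillar (Node l r) =
     ((is_leaf l \<or> is_leaf r) \<and> caterpillar l \<and> caterpillar r)"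

text \<open>Vertices of the tree, each represented by the subtree rooted there.\<close>
fun subtrees :: "'a rtree \<Rightarrow> 'a rtree set" where
  "subtrees (Leaf x) = {Leaf x}"
| "subtrees (Node l r) = insert (Node l r) (subtrees l \<union> subtrees r)"

definition two_clades :: "'a rtree \<Rightarrow> 'a set set" where
  "two_clades T = {C. \<exists>v \<in> subtrees T. C = leaves v \<and> card C = 2}"

text \<open>Induced rooted subtree on Y (degree-two vertices suppressed);
  None if Y contains no leaf of the tree.\<close>
fun induced :: "'a rtree \<Rightarrow> 'a set \<Rightarrow> 'a rtree option" where
  "induced (Leaf x) Y = (if x \<in> Y then Some (Leaf x) else None)"
| "induced (Node l r) Y =
     (case (induced l Y, induced r Y) of
        (None, None) \<Rightarrow> None
      | (Some l', None) \<Rightarrow> Some l'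
      | (None, Some r') \<Rightarrow> Some r'
      | (Some l', Some r') \<Rightarrow> Some (Node l' r'))"

definition two_clades_induced :: "'a rtree \<Rightarrow> 'a set \<Rightarrow> 'a set set" where
  "two_clades_induced T Y =
     (case induced T Y of None \<Rightarrow> {} | Some T' \<Rightarrow> two_clades T')"

text \<open>Index tuples of a kappa x ... x kappa tensor with one index per taxon in X.\<close>
definition idx :: "'a set \<Rightarrow> nat \<Rightarrow> ('a \<Rightarrow> nat) set" where
  "idx X \<kappa> = PiE X (\<lambda>_. {..<\<kappa>})"

text \<open>Real tensors on X, represented as functions on index tuples vanishing off idx X kappa.\<close>
definition is_tensor :: "'a set \<Rightarrow> nat \<Rightarrow> (('a \<Rightarrow> nat) \<Rightarrow> real) \<Rightarrow> bool" where
  "is_tensor X \<kappa> P = (\<forall>f. f \<notin> idx X \<kappa> \<longrightarrow> P f = 0)"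

definition marg :: "'a set \<Rightarrow> nat \<Rightarrow> (('a \<Rightarrow> nat) \<Rightarrow> real) \<Rightarrow> 'a set \<Rightarrow> ('a \<Rightarrow> nat) \<Rightarrow> real" where
  "marg X \<kappa> P Y g = (\<Sum>f \<in> {f \<in> idx X \<kappa>. restrict f Y = g}. P f)"

definition UE_model :: "nat \<Rightarrow> 'a rtree \<Rightarrow> (('a \<Rightarrow> nat) \<Rightarrow> real) set" where
  "UE_model \<kappa> T = {P. is_tensor (leaves T) \<kappa> P
      \<and> (\<Sum>f \<in> idx (leaves T) \<kappa>. P f) = 1
      \<and> (\<forall>Y \<subseteq> leaves T. \<forall>C \<in> two_clades_induced T Y. \<forall>a b. C = {a, b} \<longrightarrow>
           (\<forall>g \<in> idx Y \<kappa>. marg (leaves T) \<kappa> P Y g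
                            = marg (leaves T) \<kappa> P Y (g(a := g b, b := g a))))}"

text \<open>Dimension of an affine space S: dimension of the linear span of its difference vectors.\<close>
definition affine_dimension :: "(('a \<Rightarrow> nat) \<Rightarrow> real) set \<Rightarrow> nat" where
  "affine_dimension S =
     vector_space.dim (\<lambda>c (P :: ('a \<Rightarrow> nat) \<Rightarrow> real). (\<lambda>f. c * P f))
       {P - Q | P Q. P \<in> S \<and> Q \<in> S}"

definition d_kappa :: "nat \<Rightarrow> 'a rtree \<Rightarrow> nat" where
  "d_kappa \<kappa> T = affine_dimension (UE_model \<kappa> T)"

end

theory Submission
  imports Defs
begin

lemma (in vector_space) split_dim:
  assumes fin: "finite T" and VT: "V \<subseteq> span T" and WT: "W \<subseteq> span T"
    and Vd: "\<And>x y. x \<in> V \<Longrightarrow> y \<in> V \<Longrightarrow> x - y \<in> V"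
    and Mh: "module_hom scale scale M" and sh: "module_hom scale scale s"
    and MV: "\<And>v. v \<in> V \<Longrightarrow> M v \<in> W" and sW: "\<And>w. w \<in> W \<Longrightarrow> s w \<in> V"
    and Ms: "\<And>w. w \<in> W \<Longrightarrow> M (s w) = w"
  shows "dim V = dim W + dim {v\<in>V. M v = 0}"
proof -
  let ?K = "{v\<in>V. M v = 0}"
  obtain BW where BW: "BW \<subseteq> W" "independent BW" "W \<subseteq> span BW"
    using maximal_independent_subset by blast
  obtain BK where BK: "BK \<subseteq> ?K" "independent BK" "?K \<subseteq> span BK"
    using maximal_independent_subset by blast
  have fBW: "finite BW" using independent_span_bound[OF fin BW(2)] BW(1) WT by auto
  have fBK: "finite BK" using independent_span_bound[OF fin BK(2)] BK(1) VT by auto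
  have dW: "dim W = card BW" using basis_card_eq_dim BW by metis
  have dK: "dim ?K = card BK" using basis_card_eq_dim BK by metis
  have Mk: "\<And>x. x \<in> BK \<Longrightarrow> M x = 0" using BK(1) by auto
  have Msb: "\<And>b. b\<in>BW \<Longrightarrow> M (s b) = b" using Ms BW(1) by auto
  have BW0: "0 \<notin> BW" using BW(2) dependent_zero by auto
  have disj: "s ` BW \<inter> BK = {}"
  proof (rule ccontr)
    assume "s ` BW \<inter> BK \<noteq> {}"
    then obtain b where b: "b \<in> BW" "s b \<in> BK" by auto
    then have "b = 0" using Msb Mk by metis
    then show False using b BW0 by auto
  qed
  have inj: "inj_on s BW" by (metis inj_onI Msb)
  define B where "B = s ` BW \<union> BK"
  have fB: "finite B" using fBW fBK B_def by auto
  have card: "card B = card BW + card BK"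
    unfolding B_def using card_Un_disjoint[OF _ fBK disj] fBW card_image[OF inj] by auto
  have BV: "B \<subseteq> V" unfolding B_def using sW BW(1) BK(1) by auto
  have sp: "V \<subseteq> span B"
  proof
    fix v assume v: "v \<in> V"
    have "M v \<in> span BW" using MV[OF v] BW(3) by auto
    then have "s (M v) \<in> span (s ` BW)" using module_hom.span_image[OF sh] by auto
    then have 1: "s (M v) \<in> span B" using span_mono[of "s ` BW" B] B_def by auto
    have "v - s (M v) \<in> V" using Vd[OF v sW[OF MV[OF v]]] .
    moreover have "M (v - s (M v)) = 0"
      using module_hom.diff[OF Mh] Ms[OF MV[OF v]] by simp
    ultimately have "v - s (M v) \<in> span BK" using BK(3) by auto
    then have 2: "v - s (M v) \<in> span B" using span_mono[of BK B] B_def by auto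
    have "v = s (M v) + (v - s (M v))" by simp
    then show "v \<in> span B" using span_add[OF 1 2] by metis
  qed
  have ind: "independent B"
  proof (rule independent_if_scalars_zero[OF fB])
    fix f x assume sum0: "(\<Sum>x\<in>B. f x *s x) = 0" and x: "x \<in> B"
    have split: "(\<Sum>x\<in>s ` BW. f x *s x) + (\<Sum>x\<in>BK. f x *s x) = 0"
      using sum0 unfolding B_def using sum.union_disjoint[OF _ fBK disj] fBW by (metis finite_imageI)
    have "M ((\<Sum>x\<in>s ` BW. f x *s x) + (\<Sum>x\<in>BK. f x *s x)) = 0"
      using split module_hom.zero[OF Mh] by simp
    then have "(\<Sum>x\<in>s ` BW. f x *s M x) + (\<Sum>x\<in>BK. f x *s M x) = 0"
      unfolding module_hom.add[OF Mh] module_hom.sum[OF Mh] module_hom.scale[OF Mh] .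
    then have "(\<Sum>x\<in>s ` BW. f x *s M x) = 0" using Mk by simp
    then have "(\<Sum>b\<in>BW. f (s b) *s b) = 0"
      using sum.reindex[OF inj, of "\<lambda>x. f x *s M x"] Msb by simp
    then have c1: "\<And>b. b \<in> BW \<Longrightarrow> f (s b) = 0"
      using independentD[OF BW(2) fBW, of "\<lambda>b. f (s b)"] by blast
    then have "(\<Sum>x\<in>s ` BW. f x *s x) = 0" by (simp add: sum.reindex[OF inj])
    then have "(\<Sum>x\<in>BK. f x *s x) = 0" using split by simp
    then have c2: "\<And>b. b \<in> BK \<Longrightarrow> f b = 0"
      using independentD[OF BK(2) fBK, of f] by blast
    show "f x = 0" using x c1 c2 B_def by auto
  qed
  have "dim V = card B" using basis_card_eq_dim[OF BV sp ind] by simp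
  then show ?thesis using card dW dK by simp
qed

interpretation VS: vector_space "\<lambda>(c::real) (P :: 'b \<Rightarrow> real). (\<lambda>f. c * P f)"
  by unfold_locales (auto simp: fun_eq_iff algebra_simps)

lemma fin_idx: "finite X \<Longrightarrow> finite (idx X \<kappa>)"
  unfolding idx_def by (rule finite_PiE) auto

lemma card_idx: "finite X \<Longrightarrow> card (idx X \<kappa>) = \<kappa> ^ card X"
  unfolding idx_def by (simp add: card_PiE)

lemma idx_restrict: "f \<in> idx X \<kappa> \<Longrightarrow> Y \<subseteq> X \<Longrightarrow> restrict f Y \<in> idx Y \<kappa>"
  unfolding idx_def by (auto simp: PiE_iff)

lemma marg_outside: "g \<notin> idx Y \<kappa> \<Longrightarrow> Y \<subseteq> X \<Longrightarrow> marg X \<kappa> P Y g = 0"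
  unfolding marg_def using idx_restrict by (metis (mono_tags, lifting) mem_Collect_eq sum.neutral)

lemma marg_tensor: "Y \<subseteq> X \<Longrightarrow> is_tensor Y \<kappa> (marg X \<kappa> P Y)"
  unfolding is_tensor_def using marg_outside by blast

lemma marg_self: "is_tensor X \<kappa> P \<Longrightarrow> marg X \<kappa> P X g = P g"
proof (cases "g \<in> idx X \<kappa>")
  case True
  have "{f \<in> idx X \<kappa>. restrict f X = g} = {g}" using True
    by (auto simp: idx_def)
  then show ?thesis by (simp add: marg_def)
next
  case False
  have e: "{f \<in> idx X \<kappa>. restrict f X = g} = {}" using False
    by (auto simp: idx_def)
  assume "is_tensor X \<kappa> P"
  then have "P g = 0" using False by (simp add: is_tensor_def)
  then show ?thesis unfolding marg_def e by simp
qed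

lemma marg_marg:
  assumes "finite X" "Y \<subseteq> Z" "Z \<subseteq> X"
  shows "marg Z \<kappa> (marg X \<kappa> P Z) Y g = marg X \<kappa> P Y g"
proof -
  let ?S = "{f \<in> idx X \<kappa>. restrict f Y = g}"
  let ?T = "{h \<in> idx Z \<kappa>. restrict h Y = g}"
  have rr: "\<And>f. restrict (restrict f Z) Y = restrict f Y" using assms(2)
    by (auto simp: restrict_def fun_eq_iff)
  have fS: "finite ?S" using fin_idx[OF assms(1)] by auto
  have "finite Z" using finite_subset[OF assms(3) assms(1)] .
  then have fT: "finite ?T" using fin_idx[of Z] by auto
  have im: "(\<lambda>f. restrict f Z) ` ?S \<subseteq> ?T" using idx_restrict assms rr by auto
  have "marg Z \<kappa> (marg X \<kappa> P Z) Y g = (\<Sum>h\<in>?T. sum P {f \<in> ?S. restrict f Z = h})"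
    unfolding marg_def
  proof (rule sum.cong[OF refl])
    fix h assume "h \<in> ?T"
    then have "{f \<in> idx X \<kappa>. restrict f Z = h} = {f \<in> ?S. restrict f Z = h}"
      using rr by (auto simp: Int_absorb1[OF assms(2)])
    then show "sum P {f \<in> idx X \<kappa>. restrict f Z = h} = sum P {f \<in> ?S. restrict f Z = h}" by simp
  qed
  also have "\<dots> = sum P ?S" using sum.group[OF fS fT im] by simp
  finally show ?thesis unfolding marg_def .
qed

lemma marg_add: "marg X \<kappa> (P + Q) Y = marg X \<kappa> P Y + marg X \<kappa> Q Y"
  by (simp add: marg_def fun_eq_iff sum.distrib)
lemma marg_diff: "marg X \<kappa> (P - Q) Y = marg X \<kappa> P Y - marg X \<kappa> Q Y"
  by (simp add: marg_def fun_eq_iff sum_subtractf)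
lemma marg_scale: "marg X \<kappa> (\<lambda>f. c * P f) Y = (\<lambda>g. c * marg X \<kappa> P Y g)"
  by (simp add: marg_def fun_eq_iff sum_distrib_left)
lemma marg_zero: "marg X \<kappa> 0 Y = 0"
  by (simp add: marg_def fun_eq_iff)

lemma marg_mh: "module_hom (\<lambda>(c::real) (P :: ('a \<Rightarrow> nat) \<Rightarrow> real). (\<lambda>f. c * P f))
   (\<lambda>(c::real) (P :: ('a \<Rightarrow> nat) \<Rightarrow> real). (\<lambda>f. c * P f)) (\<lambda>P. marg X \<kappa> P Y)"
  by (simp add: module_hom_iff VS.module_axioms marg_add marg_scale)

lemma fiber_insert:
  assumes "z \<notin> Y" "g \<in> idx Y \<kappa>"
  shows "{f \<in> idx (insert z Y) \<kappa>. restrict f Y = g} = (\<lambda>c. g(z := c)) ` {..<\<kappa>}"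
    and "inj_on (\<lambda>c. g(z := c)) {..<\<kappa>}"
proof -
  show "inj_on (\<lambda>c. g(z := c)) {..<\<kappa>}" by (auto simp: inj_on_def fun_eq_iff dest: spec[of _ z])
  show "{f \<in> idx (insert z Y) \<kappa>. restrict f Y = g} = (\<lambda>c. g(z := c)) ` {..<\<kappa>}"
  proof (intro set_eqI iffI)
    fix f assume f: "f \<in> {f \<in> idx (insert z Y) \<kappa>. restrict f Y = g}"
    have "f = g(z := f z)"
    proof
      fix x show "f x = (g(z := f z)) x"
        using f assms by (cases "x = z"; cases "x \<in> Y") (auto simp: idx_def restrict_def PiE_iff extensional_def)
    qed
    moreover have "f z < \<kappa>" using f by (auto simp: idx_def PiE_iff)
    ultimately show "f \<in> (\<lambda>c. g(z := c)) ` {..<\<kappa>}" by blast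
  next
    fix f assume "f \<in> (\<lambda>c. g(z := c)) ` {..<\<kappa>}"
    then obtain c where c: "c < \<kappa>" "f = g(z := c)" by auto
    then show "f \<in> {f \<in> idx (insert z Y) \<kappa>. restrict f Y = g}"
      using assms by (auto simp: idx_def PiE_iff extensional_def restrict_def fun_eq_iff)
  qed
qed

lemma marg_insert:
  assumes "z \<notin> Y" "g \<in> idx Y \<kappa>"
  shows "marg (insert z Y) \<kappa> P Y g = (\<Sum>c<\<kappa>. P (g(z := c)))"
  unfolding marg_def fiber_insert[OF assms] using sum.reindex[OF fiber_insert(2)[OF assms]] by simp

definition tr :: "'a \<Rightarrow> 'a \<Rightarrow> 'a \<Rightarrow> 'a" where
  "tr a b x = (if x = a then b else if x = b then a else x)"

lemma tr_tr[simp]: "tr a b (tr a b x) = x" by (auto simp: tr_def)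
lemma tr_inj[simp]: "tr a b x = tr a b y \<longleftrightarrow> x = y" by (metis tr_tr)
lemma tr_comp: "(f \<circ> tr a b) \<circ> tr a b = f" by (auto simp: fun_eq_iff)

lemma tr_idx: "a \<in> X \<Longrightarrow> b \<in> X \<Longrightarrow> f \<in> idx X \<kappa> \<Longrightarrow> f \<circ> tr a b \<in> idx X \<kappa>"
  unfolding idx_def by (auto simp: PiE_iff extensional_def tr_def)

lemma tr_upd: "a \<in> Y \<Longrightarrow> b \<in> Y \<Longrightarrow> g \<in> idx Y \<kappa> \<Longrightarrow> restrict (g \<circ> tr a b) Y = g(a := g b, b := g a)"
  unfolding idx_def by (auto simp: PiE_iff extensional_def tr_def restrict_def fun_eq_iff)

lemma tr_upd2: "a \<noteq> b \<Longrightarrow> g \<circ> tr a b = g(a := g b, b := g a)"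
  by (auto simp: tr_def fun_eq_iff)

lemma tr_image_same: "a \<in> Y \<Longrightarrow> b \<in> Y \<Longrightarrow> tr a b ` Y = Y"
  by (auto simp: tr_def image_def)

lemma marg_rename:
  assumes ab: "a \<in> X" "b \<in> X" and Y: "Y \<subseteq> X" and g: "g \<in> idx Y \<kappa>"
    and inv: "\<And>f. f \<in> idx X \<kappa> \<Longrightarrow> P (f \<circ> tr a b) = P f"
  shows "marg X \<kappa> P Y g = marg X \<kappa> P (tr a b ` Y) (restrict (g \<circ> tr a b) (tr a b ` Y))"
  unfolding marg_def
proof (rule sum.reindex_bij_witness[where i = "\<lambda>f. f \<circ> tr a b" and j = "\<lambda>f. f \<circ> tr a b"])
  have ge: "g \<in> extensional Y" using g by (auto simp: idx_def PiE_iff)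
  show "\<And>f. f \<in> {f \<in> idx X \<kappa>. restrict f Y = g} \<Longrightarrow> f \<circ> tr a b \<circ> tr a b = f"
    "\<And>f. f \<in> {f \<in> idx X \<kappa>. restrict f (tr a b ` Y) = restrict (g \<circ> tr a b) (tr a b ` Y)} \<Longrightarrow> f \<circ> tr a b \<circ> tr a b = f"
    by (auto simp: fun_eq_iff)
  show "\<And>f. f \<in> {f \<in> idx X \<kappa>. restrict f Y = g} \<Longrightarrow> P (f \<circ> tr a b) = P f"
    using inv by auto
  fix f
  show "f \<in> {f \<in> idx X \<kappa>. restrict f Y = g} \<Longrightarrow>
     f \<circ> tr a b \<in> {f \<in> idx X \<kappa>. restrict f (tr a b ` Y) = restrict (g \<circ> tr a b) (tr a b ` Y)}"
    using tr_idx[OF ab] by (auto simp: restrict_def fun_eq_iff) (metis tr_tr)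
  show "f \<in> {f \<in> idx X \<kappa>. restrict f (tr a b ` Y) = restrict (g \<circ> tr a b) (tr a b ` Y)} \<Longrightarrow>
     f \<circ> tr a b \<in> {f \<in> idx X \<kappa>. restrict f Y = g}"
  proof -
    assume f: "f \<in> {f \<in> idx X \<kappa>. restrict f (tr a b ` Y) = restrict (g \<circ> tr a b) (tr a b ` Y)}"
    have "restrict (f \<circ> tr a b) Y = g"
    proof
      fix x show "restrict (f \<circ> tr a b) Y x = g x"
      proof (cases "x \<in> Y")
        case True
        then have "tr a b x \<in> tr a b ` Y" by auto
        then have "f (tr a b x) = g (tr a b (tr a b x))" using f
          by (auto simp: restrict_def fun_eq_iff dest!: spec[of _ "tr a b x"])
        then show ?thesis using True by simp
      next
        case False then show ?thesis using ge by (auto simp: extensional_def)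
      qed
    qed
    then show ?thesis using f tr_idx[OF ab] by auto
  qed
qed

lemma marg_sym:
  assumes ab: "a \<in> Y" "b \<in> Y" and Y: "Y \<subseteq> X" and g: "g \<in> idx Y \<kappa>"
    and inv: "\<And>f. f \<in> idx X \<kappa> \<Longrightarrow> P (f \<circ> tr a b) = P f"
  shows "marg X \<kappa> P Y g = marg X \<kappa> P Y (g(a := g b, b := g a))"
proof -
  have "a \<in> X" "b \<in> X" using ab Y by auto
  from marg_rename[of a X b Y g \<kappa> P, OF this Y g inv] show ?thesis using tr_image_same[OF ab] tr_upd[OF ab g] by simp
qed

definition sym_in :: "nat \<Rightarrow> (('a \<Rightarrow> nat) \<Rightarrow> real) \<Rightarrow> 'a \<Rightarrow> 'a \<Rightarrow> 'a set \<Rightarrow> bool" where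
  "sym_in \<kappa> Q a b Y = (\<forall>g\<in>idx Y \<kappa>. Q g = Q (g(a := g b, b := g a)))"

definition condV :: "nat \<Rightarrow> 'a list \<Rightarrow> (('a \<Rightarrow> nat) \<Rightarrow> real) \<Rightarrow> bool" where
  "condV \<kappa> xs P = (\<forall>Y \<subseteq> set xs. \<forall>us a b. filter (\<lambda>x. x \<in> Y) xs = us @ [a, b] \<longrightarrow>
       sym_in \<kappa> (marg (set xs) \<kappa> P Y) a b Y)"

definition condU :: "nat \<Rightarrow> 'a list \<Rightarrow> (('a \<Rightarrow> nat) \<Rightarrow> real) \<Rightarrow> bool" where
  "condU \<kappa> xs P = (\<forall>k us a b. take k xs = us @ [a, b] \<longrightarrow>
       sym_in \<kappa> (marg (set xs) \<kappa> P (set (take k xs))) a b (set (take k xs)))"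

lemma filter_take_distinct:
  assumes "distinct xs" shows "filter (\<lambda>x. x \<in> set (take k xs)) xs = take k xs"
proof -
  have d: "set (take k xs) \<inter> set (drop k xs) = {}"
    using assms set_take_disj_set_drop_if_distinct by fastforce
  have "filter (\<lambda>x. x \<in> set (take k xs)) xs =
      filter (\<lambda>x. x \<in> set (take k xs)) (take k xs) @ filter (\<lambda>x. x \<in> set (take k xs)) (drop k xs)"
    by (metis append_take_drop_id filter_append)
  also have "\<dots> = take k xs" using d by (auto simp: filter_id_conv filter_empty_conv)
  finally show ?thesis .
qed

lemma condV_imp_condU: "distinct xs \<Longrightarrow> condV \<kappa> xs P \<Longrightarrow> condU \<kappa> xs P"
  unfolding condV_def condU_def
  by (metis filter_take_distinct set_take_subset)

lemma sym_in_inv: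
  assumes "sym_in \<kappa> P y z X" "y \<noteq> z" "f \<in> idx X \<kappa>"
  shows "P (f \<circ> tr y z) = P f"
  using assms by (simp add: sym_in_def tr_upd2)

lemma condU_snoc:
  assumes dist: "distinct (ws @ [y, z])" and T: "is_tensor (set (ws @ [y, z])) \<kappa> P"
  shows "condU \<kappa> (ws @ [y, z]) P \<longleftrightarrow>
    condU \<kappa> (ws @ [y]) (marg (set (ws @ [y, z])) \<kappa> P (set (ws @ [y]))) \<and> sym_in \<kappa> P y z (set (ws @ [y, z]))"
    (is "?L \<longleftrightarrow> ?R1 \<and> ?R2")
proof -
  let ?xs = "ws @ [y, z]" and ?ys = "ws @ [y]"
  have xs: "?xs = ?ys @ [z]" by simp
  have mm: "\<And>k. marg (set ?ys) \<kappa> (marg (set ?xs) \<kappa> P (set ?ys)) (set (take k ?ys)) =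
       marg (set ?xs) \<kappa> P (set (take k ?ys))"
  proof
    fix k g
    have "set (take k ?ys) \<subseteq> set ?ys" by (rule set_take_subset)
    moreover have "set ?ys \<subseteq> set ?xs" by auto
    ultimately show "marg (set ?ys) \<kappa> (marg (set ?xs) \<kappa> P (set ?ys)) (set (take k ?ys)) g =
       marg (set ?xs) \<kappa> P (set (take k ?ys)) g"
      by (intro marg_marg) auto
  qed
  have tk: "\<And>k. k \<le> length ?ys \<Longrightarrow> take k ?xs = take k ?ys" by (simp add: xs del: append.simps append_assoc)
  show ?thesis
  proof
    assume L: ?L
    have "take (length ?xs) ?xs = ws @ [y, z]" by simp
    then have "sym_in \<kappa> (marg (set ?xs) \<kappa> P (set ?xs)) y z (set ?xs)"
      using L unfolding condU_def by (metis take_all order_refl)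
    then have R2: ?R2 using marg_self[OF T] by (simp add: sym_in_def)
    have R1: ?R1 unfolding condU_def
    proof (intro allI impI)
      fix k us a b assume k: "take k ?ys = us @ [a, b]"
      define k' where "k' = min k (length ?ys)"
      have e: "take k ?ys = take k' ?xs" using tk[of k'] by (simp add: k'_def min_def)
      then show "sym_in \<kappa> (marg (set ?ys) \<kappa> (marg (set ?xs) \<kappa> P (set ?ys)) (set (take k ?ys))) a b (set (take k ?ys))"
        using L k unfolding condU_def mm by metis
    qed
    show "?R1 \<and> ?R2" using R1 R2 by simp
  next
    assume R: "?R1 \<and> ?R2"
    show ?L unfolding condU_def
    proof (intro allI impI)
      fix k us a b assume k: "take k ?xs = us @ [a, b]"
      show "sym_in \<kappa> (marg (set ?xs) \<kappa> P (set (take k ?xs))) a b (set (take k ?xs))"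
      proof (cases "k \<le> length ?ys")
        case True
        then show ?thesis using R k tk[OF True] unfolding condU_def mm by metis
      next
        case False
        then have "take k ?xs = ?xs" by simp
        then have "a = y" "b = z" "set (take k ?xs) = set ?xs" using k by auto
        then show ?thesis using R marg_self[OF T] by (simp add: sym_in_def)
      qed
    qed
  qed
qed

lemma condU_imp_condV:
  "distinct xs \<Longrightarrow> is_tensor (set xs) \<kappa> P \<Longrightarrow> condU \<kappa> xs P \<Longrightarrow> condV \<kappa> xs P"
proof (induction xs arbitrary: P rule: rev_induct)
  case Nil
  then show ?case by (simp add: condV_def)
next
  case (snoc z ys)
  show ?case
  proof (cases ys rule: rev_cases)
    case Nil
    then show ?thesis unfolding condV_def by (auto simp: Cons_eq_append_conv)
  next
    case (snoc ws y)
    let ?X = "set (ys @ [z])" and ?M = "marg (set (ys @ [z])) \<kappa> P (set ys)"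
    have xs: "ys @ [z] = ws @ [y, z]" using snoc by simp
    have dist: "distinct (ws @ [y, z])" using snoc.prems(1) xs by simp
    have yz: "y \<noteq> z" using dist by simp
    have T: "is_tensor (set (ws @ [y, z])) \<kappa> P" using snoc.prems(2) xs by simp
    have cs: "condU \<kappa> ys ?M \<and> sym_in \<kappa> P y z ?X"
      using condU_snoc[OF dist T] snoc.prems(3) xs snoc by simp
    have TM: "is_tensor (set ys) \<kappa> ?M" by (rule marg_tensor) auto
    have IH: "condV \<kappa> ys ?M" using snoc.IH[OF _ TM] cs snoc.prems(1) by simp
    have inv: "\<And>f. f \<in> idx ?X \<kappa> \<Longrightarrow> P (f \<circ> tr y z) = P f"
      using sym_in_inv[OF _ yz] cs by blast
    have mm: "\<And>Y g. Y \<subseteq> set ys \<Longrightarrow> marg (set ys) \<kappa> ?M Y g = marg ?X \<kappa> P Y g"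
      by (rule marg_marg) auto
    show ?thesis unfolding condV_def
    proof (intro allI impI)
      fix Y us a b assume Y: "Y \<subseteq> ?X" and fl: "filter (\<lambda>x. x \<in> Y) (ys @ [z]) = us @ [a, b]"
      show "sym_in \<kappa> (marg ?X \<kappa> P Y) a b Y"
      proof (cases "z \<in> Y")
        case False
        then have f2: "filter (\<lambda>x. x \<in> Y) ys = us @ [a, b]" using fl by simp
        have Ys: "Y \<subseteq> set ys" using Y False by auto
        have "sym_in \<kappa> (marg (set ys) \<kappa> ?M Y) a b Y" using IH Ys f2 unfolding condV_def by blast
        then show ?thesis using mm[OF Ys] by (simp add: sym_in_def)
      next
        case True
        then have f2: "filter (\<lambda>x. x \<in> Y) ys = us @ [a]" and bz: "b = z" using fl by auto
        have "a \<in> set (filter (\<lambda>x. x \<in> Y) ys)" using f2 by simp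
        then have aY: "a \<in> Y" "a \<in> set ys" by auto
        have az: "a \<noteq> z" using aY snoc.prems(1) by auto
        show ?thesis
        proof (cases "y \<in> Y")
          case True
          then have "a = y" using f2 snoc by auto
          then show ?thesis unfolding sym_in_def bz
            using marg_sym[of y Y z "?X" _ \<kappa> P, OF True \<open>z \<in> Y\<close> Y _ inv] by blast
        next
          case False
          let ?Y' = "tr y z ` Y"
          have Y'eq: "?Y' = insert y (Y - {z})" using \<open>z \<in> Y\<close> False
            by (auto simp: tr_def image_def)
          have Y's: "?Y' \<subseteq> set ys" using Y'eq Y snoc by auto
          have fws: "filter (\<lambda>x. x \<in> Y) ws = us @ [a]" using f2 False snoc by simp
          have "filter (\<lambda>x. x \<in> ?Y') ws = filter (\<lambda>x. x \<in> Y) ws"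
          proof (rule filter_cong[OF refl])
            fix x assume "x \<in> set ws"
            then have "x \<noteq> y" "x \<noteq> z" using dist by auto
            then show "(x \<in> ?Y') = (x \<in> Y)" using Y'eq by auto
          qed
          then have "filter (\<lambda>x. x \<in> ?Y') ys = us @ [a, y]" using fws snoc Y'eq by simp
          then have sY': "sym_in \<kappa> (marg ?X \<kappa> P ?Y') a y ?Y'"
            using IH Y's mm[OF Y's] unfolding condV_def sym_in_def by metis
          have ay: "a \<noteq> y" using aY False by auto
          have yX: "y \<in> ?X" "z \<in> ?X" using snoc by auto
          show ?thesis unfolding sym_in_def bz
          proof
            fix g assume g: "g \<in> idx Y \<kappa>"
            let ?g2 = "g(a := g z, z := g a)"
            have g2: "?g2 \<in> idx Y \<kappa>" using g aY \<open>z \<in> Y\<close> by (auto simp: idx_def PiE_iff extensional_def)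
            let ?h = "restrict (g \<circ> tr y z) ?Y'"
            have h: "?h \<in> idx ?Y' \<kappa>" using g by (auto simp: idx_def PiE_iff tr_def)
            have eq: "restrict (?g2 \<circ> tr y z) ?Y' = ?h(a := ?h y, y := ?h a)"
              using ay az yz aY \<open>z \<in> Y\<close> False Y'eq
              by (auto simp: fun_eq_iff restrict_def tr_def)
            have "marg ?X \<kappa> P Y g = marg ?X \<kappa> P ?Y' ?h"
              using marg_rename[of y ?X z Y g \<kappa> P, OF yX Y g inv] .
            also have "\<dots> = marg ?X \<kappa> P ?Y' (?h(a := ?h y, y := ?h a))"
              using sY' h unfolding sym_in_def by blast
            also have "\<dots> = marg ?X \<kappa> P Y ?g2"
              using marg_rename[of y ?X z Y ?g2 \<kappa> P, OF yX Y g2 inv] eq by simp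
            finally show "marg ?X \<kappa> P Y g = marg ?X \<kappa> P Y ?g2" .
          qed
        qed
      qed
    qed
  qed
qed

lemma condU_iff_condV:
  "distinct xs \<Longrightarrow> is_tensor (set xs) \<kappa> P \<Longrightarrow> condU \<kappa> xs P \<longleftrightarrow> condV \<kappa> xs P"
  using condU_imp_condV condV_imp_condU by blast

lemma sum_app: "(\<Sum>i\<in>A. F i) x = (\<Sum>i\<in>A. F i x)"
  by (induction A rule: infinite_finite_induct) auto

definition delta :: "'b \<Rightarrow> 'b \<Rightarrow> real" where
  "delta f0 = (\<lambda>f. if f = f0 then 1 else 0)"

definition Fs :: "'b set \<Rightarrow> ('b \<Rightarrow> real) set" where
  "Fs \<Omega> = {P. \<forall>f. f \<notin> \<Omega> \<longrightarrow> P f = 0}"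

lemma delta_inj: "inj delta"
  by (rule injI) (metis delta_def zero_neq_one)

lemma Fs_span: assumes "finite \<Omega>" shows "Fs \<Omega> \<subseteq> VS.span (delta ` \<Omega>)"
proof
  fix P assume P: "P \<in> Fs \<Omega>"
  have eq: "P = (\<Sum>f\<in>\<Omega>. (\<lambda>x. P f * delta f x))"
  proof
    fix x
    show "P x = (\<Sum>f\<in>\<Omega>. (\<lambda>x. P f * delta f x)) x"
      unfolding sum_app using P assms by (cases "x \<in> \<Omega>") (auto simp: delta_def Fs_def if_distrib cong: if_cong)
  qed
  have "(\<Sum>f\<in>\<Omega>. (\<lambda>x. P f * delta f x)) \<in> VS.span (delta ` \<Omega>)"
    by (intro VS.span_sum VS.span_scale VS.span_base) auto
  then show "P \<in> VS.span (delta ` \<Omega>)" using eq by simp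
qed

lemma dim_Fs: assumes fin: "finite \<Omega>" shows "VS.dim (Fs \<Omega>) = card \<Omega>"
proof -
  have sub: "delta ` \<Omega> \<subseteq> Fs \<Omega>" by (auto simp: Fs_def delta_def)
  have ind: "VS.independent (delta ` \<Omega>)"
  proof (rule VS.independent_if_scalars_zero)
    show "finite (delta ` \<Omega>)" using fin by simp
    fix c x assume s: "(\<Sum>x\<in>delta ` \<Omega>. (\<lambda>f. c x * x f)) = 0" and x: "x \<in> delta ` \<Omega>"
    then obtain f0 where f0: "f0 \<in> \<Omega>" "x = delta f0" by auto
    have "0 = (\<Sum>x\<in>delta ` \<Omega>. (\<lambda>f. c x * x f)) f0" using s by simp
    also have "\<dots> = (\<Sum>f\<in>\<Omega>. c (delta f) * delta f f0)"
      unfolding sum_app using sum.reindex[OF inj_on_subset[OF delta_inj subset_UNIV], of "\<lambda>x. c x * x f0" \<Omega>]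
      by simp
    also have "\<dots> = (\<Sum>f\<in>\<Omega>. if f = f0 then c (delta f) else 0)"
      by (rule sum.cong) (auto simp: delta_def)
    also have "\<dots> = c x" using f0 fin by simp
    finally show "c x = 0" by simp
  qed
  have "VS.dim (Fs \<Omega>) = card (delta ` \<Omega>)"
    using VS.basis_card_eq_dim[OF sub Fs_span[OF fin] ind] by simp
  then show ?thesis using card_image[OF inj_on_subset[OF delta_inj subset_UNIV]] by simp
qed

lemma dim_zero: "VS.dim {0} = 0"
  using VS.dim_unique[of "{}" "{0}" 0] VS.span_zero VS.independent_empty by auto

lemma tensor_Fs: "{P. is_tensor X \<kappa> P} = Fs (idx X \<kappa>)"
  by (auto simp: is_tensor_def Fs_def)

definition Ut :: "nat \<Rightarrow> 'a list \<Rightarrow> (('a \<Rightarrow> nat) \<Rightarrow> real) set" where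
  "Ut \<kappa> xs = {P. is_tensor (set xs) \<kappa> P \<and> condU \<kappa> xs P}"

lemma sym_in_diff: "sym_in \<kappa> A a b Y \<Longrightarrow> sym_in \<kappa> B a b Y \<Longrightarrow> sym_in \<kappa> (A - B) a b Y"
  by (simp add: sym_in_def)

lemma sym_in_zero: "sym_in \<kappa> 0 a b Y"
  by (simp add: sym_in_def)

lemma tensor_diff: "is_tensor X \<kappa> A \<Longrightarrow> is_tensor X \<kappa> B \<Longrightarrow> is_tensor X \<kappa> (A - B)"
  by (simp add: is_tensor_def)

lemma Ut_diff: "P \<in> Ut \<kappa> xs \<Longrightarrow> Q \<in> Ut \<kappa> xs \<Longrightarrow> P - Q \<in> Ut \<kappa> xs"
  unfolding Ut_def condU_def by (auto simp: marg_diff intro!: tensor_diff sym_in_diff)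

lemma condU_zero: "condU \<kappa> xs 0"
  unfolding condU_def by (simp add: marg_zero sym_in_zero)

lemma tens_span:
  assumes "finite \<Omega>" "idx X \<kappa> \<subseteq> \<Omega>"
  shows "{P. is_tensor X \<kappa> P} \<subseteq> VS.span (delta ` \<Omega>)"
proof -
  have "Fs (idx X \<kappa>) \<subseteq> Fs \<Omega>" using assms by (auto simp: Fs_def)
  then show ?thesis using Fs_span[OF assms(1)] tensor_Fs by blast
qed

lemma upd_idx: "g \<in> idx X \<kappa> \<Longrightarrow> a \<in> X \<Longrightarrow> c < \<kappa> \<Longrightarrow> g(a := c) \<in> idx X \<kappa>"
  by (auto simp: idx_def PiE_iff extensional_def)

lemma idx_lt: "g \<in> idx X \<kappa> \<Longrightarrow> a \<in> X \<Longrightarrow> g a < \<kappa>"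
  by (auto simp: idx_def PiE_iff)

lemma dim_Sym:
  assumes XY: "y \<in> X" "z \<in> X" "y \<noteq> z" and finX: "finite X"
  shows "VS.dim {P. is_tensor X \<kappa> P \<and> sym_in \<kappa> P y z X} = card {f \<in> idx X \<kappa>. f y \<le> f z}"
proof -
  define \<Omega> where "\<Omega> = {f \<in> idx X \<kappa>. f y \<le> f z}"
  define Sym where "Sym = {P. is_tensor X \<kappa> P \<and> sym_in \<kappa> P y z X}"
  define M where "M = (\<lambda>P (f :: 'a \<Rightarrow> nat). if f \<in> \<Omega> then P f else (0::real))"
  define s where "s = (\<lambda>Q (f :: 'a \<Rightarrow> nat). if f y \<le> f z then Q f else (Q (f \<circ> tr y z) :: real))"
  define T where "T = delta ` (idx X \<kappa>)"
  have finT: "finite T" unfolding T_def using fin_idx finX by auto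
  have fO: "finite \<Omega>" using fin_idx[OF finX] \<Omega>_def by auto
  have tX: "{P. is_tensor X \<kappa> P} \<subseteq> VS.span T" unfolding T_def
    by (rule tens_span) (use fin_idx finX in auto)
  have OT: "Fs \<Omega> \<subseteq> VS.span T" unfolding T_def
    using Fs_span[OF fO] VS.span_mono[of "delta ` \<Omega>" "delta ` idx X \<kappa>"] \<Omega>_def by auto
  have Mh: "module_hom (\<lambda>(c::real) (P :: ('a \<Rightarrow> nat) \<Rightarrow> real). (\<lambda>f. c * P f))
   (\<lambda>(c::real) (P :: ('a \<Rightarrow> nat) \<Rightarrow> real). (\<lambda>f. c * P f)) M"
    unfolding M_def by (simp add: module_hom_iff VS.module_axioms fun_eq_iff)
  have sh: "module_hom (\<lambda>(c::real) (P :: ('a \<Rightarrow> nat) \<Rightarrow> real). (\<lambda>f. c * P f))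
   (\<lambda>(c::real) (P :: ('a \<Rightarrow> nat) \<Rightarrow> real). (\<lambda>f. c * P f)) s"
    unfolding s_def by (simp add: module_hom_iff VS.module_axioms fun_eq_iff)
  have Sym_diff: "\<And>P Q. P \<in> Sym \<Longrightarrow> Q \<in> Sym \<Longrightarrow> P - Q \<in> Sym"
    unfolding Sym_def by (auto intro: tensor_diff sym_in_diff)
  have upd: "\<And>g. g(y := g z, z := g y) = g \<circ> tr y z" using tr_upd2[OF XY(3)] by metis
  have d: "VS.dim Sym = VS.dim (Fs \<Omega>) + VS.dim {P \<in> Sym. M P = 0}"
  proof (rule VS.split_dim[OF finT _ OT Sym_diff Mh sh])
    show "Sym \<subseteq> VS.span T" using tX Sym_def by auto
    show "\<And>v. v \<in> Sym \<Longrightarrow> M v \<in> Fs \<Omega>" by (auto simp: M_def Fs_def)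
    show "\<And>w. w \<in> Fs \<Omega> \<Longrightarrow> M (s w) = w" by (auto simp: M_def s_def Fs_def \<Omega>_def fun_eq_iff)
    show "\<And>w. w \<in> Fs \<Omega> \<Longrightarrow> s w \<in> Sym"
    proof -
      fix w assume w: "w \<in> Fs \<Omega>"
      have t: "is_tensor X \<kappa> (s w)" unfolding is_tensor_def
      proof (intro allI impI)
        fix f assume f: "f \<notin> idx X \<kappa>"
        have "f \<circ> tr y z \<notin> idx X \<kappa>" using f tr_idx[OF XY(1,2), of "f \<circ> tr y z" \<kappa>] tr_comp[of f y z] by auto
        then show "s w f = 0" using f w by (auto simp: s_def Fs_def \<Omega>_def)
      qed
      have "sym_in \<kappa> (s w) y z X" unfolding sym_in_def upd
      proof
        fix g assume g: "g \<in> idx X \<kappa>"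
        have a: "(g \<circ> tr y z) y = g z" "(g \<circ> tr y z) z = g y" by (auto simp: tr_def)
        show "s w g = s w (g \<circ> tr y z)"
        proof (cases "g y = g z")
          case True
          then have "g \<circ> tr y z = g" by (auto simp: tr_def fun_eq_iff)
          then show ?thesis by simp
        next
          case False
          then show ?thesis using a by (auto simp: s_def tr_comp)
        qed
      qed
      then show "s w \<in> Sym" using t Sym_def by auto
    qed
  qed
  have "{P \<in> Sym. M P = 0} = {0}"
  proof (intro set_eqI iffI)
    fix P assume P: "P \<in> {P \<in> Sym. M P = 0}"
    have "P f = 0" for f
    proof (cases "f \<in> idx X \<kappa>")
      case False then show ?thesis using P by (auto simp: Sym_def is_tensor_def)
    next
      case True
      show ?thesis
      proof (cases "f y \<le> f z")
        case True
        then show ?thesis using P \<open>f \<in> idx X \<kappa>\<close> by (auto simp: M_def \<Omega>_def fun_eq_iff dest!: spec[of _ f])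
      next
        case False
        have i: "f \<circ> tr y z \<in> idx X \<kappa>" using tr_idx[OF XY(1,2) \<open>f \<in> idx X \<kappa>\<close>] .
        have "(f \<circ> tr y z) y \<le> (f \<circ> tr y z) z" using False by (auto simp: tr_def)
        then have "P (f \<circ> tr y z) = 0" using P i by (auto simp: M_def \<Omega>_def fun_eq_iff dest!: spec[of _ "f \<circ> tr y z"])
        moreover have "P (f \<circ> tr y z) = P f" using sym_in_inv[OF _ XY(3) \<open>f \<in> idx X \<kappa>\<close>] P Sym_def by auto
        ultimately show ?thesis by simp
      qed
    qed
    then show "P \<in> {0}" by (auto simp: fun_eq_iff)
  next
    fix P :: "('a \<Rightarrow> nat) \<Rightarrow> real" assume "P \<in> {0}"
    then have "P = 0" by simp
    moreover have "M 0 = 0" by (simp add: M_def fun_eq_iff)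
    ultimately show "P \<in> {P \<in> Sym. M P = 0}"
      by (simp add: Sym_def is_tensor_def sym_in_zero)
  qed
  then show ?thesis using d dim_zero dim_Fs[OF fO] Sym_def \<Omega>_def by simp
qed

lemma card_Omega:
  assumes XY: "y \<in> X" "z \<in> X" "y \<noteq> z" and finX: "finite X"
  shows "2 * card {f \<in> idx X \<kappa>. f y \<le> f z} = \<kappa> ^ card X + \<kappa> ^ (card X - 1)"
proof -
  define A where "A = {f \<in> idx X \<kappa>. f y \<le> f z}"
  define B where "B = {f \<in> idx X \<kappa>. f z \<le> f y}"
  define D where "D = {f \<in> idx X \<kappa>. f y = f z}"
  have fin: "finite A" "finite B" using fin_idx[OF finX] A_def B_def by auto
  have AB: "bij_betw (\<lambda>f. f \<circ> tr y z) A B"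
    by (rule bij_betw_byWitness[where f' = "\<lambda>f. f \<circ> tr y z"])
       (auto simp: A_def B_def tr_comp tr_idx[OF XY(1,2)], auto simp: tr_def)
  have cAB: "card A = card B" using bij_betw_same_card[OF AB] .
  have U: "A \<union> B = idx X \<kappa>" "A \<inter> B = D" by (auto simp: A_def B_def D_def)
  have "card (A \<union> B) + card (A \<inter> B) = card A + card B" using card_Un_Int[OF fin] by simp
  then have e: "2 * card A = card (idx X \<kappa>) + card D" using U cAB by simp
  let ?Y = "X - {z}"
  have DY: "bij_betw (\<lambda>f. restrict f ?Y) D (idx ?Y \<kappa>)"
  proof (rule bij_betw_byWitness[where f' = "\<lambda>g. g(z := g y)"])
    show "\<forall>a\<in>D. (restrict a ?Y)(z := restrict a ?Y y) = a"
    proof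
      fix a assume a: "a \<in> D"
      then have ae: "a \<in> extensional X" and ayz: "a y = a z" by (auto simp: D_def idx_def PiE_iff)
      show "(restrict a ?Y)(z := restrict a ?Y y) = a"
      proof
        fix x show "((restrict a ?Y)(z := restrict a ?Y y)) x = a x"
        proof (cases "x = z")
          case True then show ?thesis using XY ayz by simp
        next
          case False then show ?thesis using ae extensional_arb[OF ae, of x] by (cases "x \<in> X") auto
        qed
      qed
    qed
    show "\<forall>a'\<in>idx ?Y \<kappa>. restrict (a'(z := a' y)) ?Y = a'"
    proof
      fix a assume a: "a \<in> idx ?Y \<kappa>"
      then have ae: "a \<in> extensional ?Y" by (auto simp: idx_def PiE_iff)
      show "restrict (a(z := a y)) ?Y = a"
      proof
        fix x show "restrict (a(z := a y)) ?Y x = a x"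
          using extensional_arb[OF ae, of x] by (cases "x \<in> ?Y") auto
      qed
    qed
    show "(\<lambda>f. restrict f ?Y) ` D \<subseteq> idx ?Y \<kappa>"
    proof (rule image_subsetI)
      fix f assume "f \<in> D"
      then have "f \<in> idx X \<kappa>" unfolding D_def by blast
      then show "restrict f ?Y \<in> idx ?Y \<kappa>" by (rule idx_restrict) auto
    qed
    show "(\<lambda>g. g(z := g y)) ` idx ?Y \<kappa> \<subseteq> D"
    proof (rule image_subsetI)
      fix a assume a: "a \<in> idx ?Y \<kappa>"
      have "a(z := a y) \<in> idx (insert z ?Y) \<kappa>"
        using a XY by (auto simp: idx_def PiE_iff extensional_def)
      moreover have "insert z ?Y = X" using XY by auto
      ultimately show "a(z := a y) \<in> D" using XY by (simp add: D_def)
    qed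
  qed
  have "card D = \<kappa> ^ (card X - 1)"
    using bij_betw_same_card[OF DY] card_idx[of ?Y \<kappa>] finX XY by simp
  then show ?thesis using e card_idx[OF finX] A_def by simp
qed

lemma dim_step:
  assumes dist: "distinct (ws @ [y, z])"
  shows "2 * VS.dim (Ut \<kappa> (ws @ [y, z])) + \<kappa> ^ (length ws + 1)
       = 2 * VS.dim (Ut \<kappa> (ws @ [y])) + \<kappa> ^ (length ws + 2)"
proof -
  define X where "X = set (ws @ [y, z])"
  define Ys where "Ys = set (ws @ [y])"
  have XY: "X = insert z Ys" "z \<notin> Ys" "y \<in> Ys" "y \<noteq> z" "Ys \<subseteq> X" "y \<in> X" "z \<in> X"
    using dist by (auto simp: X_def Ys_def)
  have finX: "finite X" "finite Ys" by (auto simp: X_def Ys_def)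
  define M where "M = (\<lambda>P. marg X \<kappa> P Ys)"
  define s where "s = (\<lambda>Q (f :: 'a \<Rightarrow> nat). if f \<in> idx X \<kappa> \<and> f z = f y then Q (restrict f Ys) else (0::real))"
  define Sym where "Sym = {P. is_tensor X \<kappa> P \<and> sym_in \<kappa> P y z X}"
  define \<Omega> where "\<Omega> = {f \<in> idx X \<kappa>. f y \<le> f z}"
  define T where "T = delta ` (idx X \<kappa> \<union> idx Ys \<kappa>)"
  have finT: "finite T" unfolding T_def using fin_idx finX by auto
  have tX: "{P. is_tensor X \<kappa> P} \<subseteq> VS.span T" unfolding T_def
    by (rule tens_span) (use fin_idx finX in auto)
  have tY: "{P. is_tensor Ys \<kappa> P} \<subseteq> VS.span T" unfolding T_def
    by (rule tens_span) (use fin_idx finX in auto)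
  have UtX: "Ut \<kappa> (ws @ [y, z]) = {P. is_tensor X \<kappa> P \<and> condU \<kappa> (ws @ [y]) (M P) \<and> sym_in \<kappa> P y z X}"
    unfolding Ut_def M_def X_def Ys_def using condU_snoc[OF dist] by auto
  have UtY: "Ut \<kappa> (ws @ [y]) = {P. is_tensor Ys \<kappa> P \<and> condU \<kappa> (ws @ [y]) P}"
    unfolding Ut_def Ys_def by simp
  have Mh: "module_hom (\<lambda>(c::real) (P :: ('a \<Rightarrow> nat) \<Rightarrow> real). (\<lambda>f. c * P f))
   (\<lambda>(c::real) (P :: ('a \<Rightarrow> nat) \<Rightarrow> real). (\<lambda>f. c * P f)) M"
    unfolding M_def by (rule marg_mh)
  have sh: "module_hom (\<lambda>(c::real) (P :: ('a \<Rightarrow> nat) \<Rightarrow> real). (\<lambda>f. c * P f))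
   (\<lambda>(c::real) (P :: ('a \<Rightarrow> nat) \<Rightarrow> real). (\<lambda>f. c * P f)) s"
    unfolding s_def by (simp add: module_hom_iff VS.module_axioms fun_eq_iff)
  have MT: "\<And>P. is_tensor Ys \<kappa> (M P)" unfolding M_def using marg_tensor XY by blast
  have sT: "\<And>Q. is_tensor X \<kappa> (s Q)" unfolding s_def is_tensor_def by auto
  have sSym: "\<And>Q. sym_in \<kappa> (s Q) y z X"
    unfolding sym_in_def
  proof
    fix Q g assume g: "g \<in> idx X \<kappa>"
    have g': "g(y := g z, z := g y) \<in> idx X \<kappa>"
      by (rule upd_idx[OF upd_idx[OF g XY(6) idx_lt[OF g XY(7)]] XY(7) idx_lt[OF g XY(6)]])
    show "s Q g = s Q (g(y := g z, z := g y))"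
    proof (cases "g z = g y")
      case True
      then have "g(y := g z, z := g y) = g" by auto
      then show ?thesis by simp
    next
      case False
      then show ?thesis using XY g g' by (simp add: s_def)
    qed
  qed
  have Ms: "\<And>Q. is_tensor Ys \<kappa> Q \<Longrightarrow> M (s Q) = Q"
  proof
    fix Q g assume Q: "is_tensor Ys \<kappa> Q"
    show "M (s Q) g = Q g"
    proof (cases "g \<in> idx Ys \<kappa>")
      case True
      have "M (s Q) g = (\<Sum>c<\<kappa>. s Q (g(z := c)))"
        unfolding M_def XY(1) using marg_insert[OF XY(2) True] by simp
      also have "\<dots> = (\<Sum>c<\<kappa>. if c = g y then Q g else 0)"
      proof (rule sum.cong[OF refl])
        fix c assume c: "c \<in> {..<\<kappa>}"
        have i: "g(z := c) \<in> idx X \<kappa>" using True c XY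
          by (auto simp: idx_def PiE_iff extensional_def)
        have r: "restrict (g(z := c)) Ys = g" using True XY
          by (auto simp: idx_def PiE_iff extensional_def restrict_def fun_eq_iff)
        show "s Q (g(z := c)) = (if c = g y then Q g else 0)"
          using i r XY by (auto simp: s_def)
      qed
      also have "\<dots> = Q g" using idx_lt[OF True XY(3)] by simp
      finally show ?thesis .
    next
      case False
      then show ?thesis using Q marg_outside[OF False XY(5)] by (simp add: M_def is_tensor_def)
    qed
  qed
  define K where "K = {P \<in> Ut \<kappa> (ws @ [y, z]). M P = 0}"
  have d1: "VS.dim (Ut \<kappa> (ws @ [y, z])) = VS.dim (Ut \<kappa> (ws @ [y])) + VS.dim K"
    unfolding K_def
  proof (rule VS.split_dim[OF finT _ _ Ut_diff Mh sh])
    show "Ut \<kappa> (ws @ [y, z]) \<subseteq> VS.span T" using tX UtX by auto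
    show "Ut \<kappa> (ws @ [y]) \<subseteq> VS.span T" using tY UtY by auto
    show "\<And>v. v \<in> Ut \<kappa> (ws @ [y, z]) \<Longrightarrow> M v \<in> Ut \<kappa> (ws @ [y])" using UtX UtY MT by auto
    show "\<And>w. w \<in> Ut \<kappa> (ws @ [y]) \<Longrightarrow> s w \<in> Ut \<kappa> (ws @ [y, z])" using UtX UtY sT sSym Ms by auto
    show "\<And>w. w \<in> Ut \<kappa> (ws @ [y]) \<Longrightarrow> M (s w) = w" using UtY Ms by auto
  qed
  have KS: "K = {P \<in> Sym. M P = 0}"
    unfolding K_def Sym_def UtX using condU_zero by auto
  have Sym_diff: "\<And>P Q. P \<in> Sym \<Longrightarrow> Q \<in> Sym \<Longrightarrow> P - Q \<in> Sym"
    unfolding Sym_def by (auto intro: tensor_diff sym_in_diff)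
  have d2: "VS.dim Sym = VS.dim {P. is_tensor Ys \<kappa> P} + VS.dim K"
    unfolding KS
  proof (rule VS.split_dim[OF finT _ tY Sym_diff Mh sh])
    show "Sym \<subseteq> VS.span T" using tX Sym_def by auto
    show "\<And>v. v \<in> Sym \<Longrightarrow> M v \<in> {P. is_tensor Ys \<kappa> P}" using MT by auto
    show "\<And>w. w \<in> {P. is_tensor Ys \<kappa> P} \<Longrightarrow> s w \<in> Sym" using sT sSym Sym_def by auto
    show "\<And>w. w \<in> {P. is_tensor Ys \<kappa> P} \<Longrightarrow> M (s w) = w" using Ms by auto
  qed
  have dY: "VS.dim {P. is_tensor Ys \<kappa> P} = \<kappa> ^ (length ws + 1)"
    unfolding tensor_Fs using dim_Fs[OF fin_idx[OF finX(2)]] card_idx[OF finX(2)] dist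
    by (simp add: Ys_def distinct_card)
  have dS: "VS.dim Sym = card \<Omega>" unfolding Sym_def \<Omega>_def
    using dim_Sym[OF XY(6,7,4) finX(1)] .
  have cX: "card X = length ws + 2" using dist by (simp add: X_def distinct_card)
  have cO: "2 * card \<Omega> = \<kappa> ^ (length ws + 2) + \<kappa> ^ (length ws + 1)"
    unfolding \<Omega>_def using card_Omega[OF XY(6,7,4) finX(1)] cX by simp
  show ?thesis using d1 d2 dY dS cO by linarith
qed

lemma condU_single: "condU \<kappa> [z] P"
  unfolding condU_def by (auto simp: take_Cons' Cons_eq_append_conv split: if_splits)

lemma dim_Ut: "distinct xs \<Longrightarrow> xs \<noteq> [] \<Longrightarrow> 2 * VS.dim (Ut \<kappa> xs) = \<kappa> ^ length xs + \<kappa>"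
proof (induction xs rule: rev_induct)
  case Nil then show ?case by simp
next
  case (snoc z ys)
  show ?case
  proof (cases ys rule: rev_cases)
    case Nil
    have "Ut \<kappa> [z] = Fs (idx {z} \<kappa>)" unfolding Ut_def using condU_single by (auto simp: Fs_def is_tensor_def)
    then have "VS.dim (Ut \<kappa> [z]) = \<kappa>" using dim_Fs[OF fin_idx[of "{z}" \<kappa>]] card_idx[of "{z}" \<kappa>] by simp
    then show ?thesis using Nil by simp
  next
    case (snoc ws y)
    have d: "distinct (ws @ [y, z])" using snoc.prems snoc by simp
    have IH: "2 * VS.dim (Ut \<kappa> (ws @ [y])) = \<kappa> ^ (length ws + 1) + \<kappa>"
      using snoc.IH snoc.prems snoc by simp
    show ?thesis using dim_step[OF d, of \<kappa>] IH snoc by simp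
  qed
qed

lemma Ut_add: "P \<in> Ut \<kappa> xs \<Longrightarrow> Q \<in> Ut \<kappa> xs \<Longrightarrow> P + Q \<in> Ut \<kappa> xs"
  unfolding Ut_def condU_def sym_in_def is_tensor_def by (auto simp: marg_add)

lemma Ut_scale: "P \<in> Ut \<kappa> xs \<Longrightarrow> (\<lambda>f. c * P f) \<in> Ut \<kappa> xs"
  unfolding Ut_def condU_def sym_in_def is_tensor_def by (auto simp: marg_scale)

lemma affine_Ut:
  assumes dist: "distinct xs" and ne: "xs \<noteq> []" and k: "\<kappa> \<ge> 1"
  shows "affine_dimension {P \<in> Ut \<kappa> xs. (\<Sum>f\<in>idx (set xs) \<kappa>. P f) = 1} + 1 = VS.dim (Ut \<kappa> xs)"
proof -
  define X where "X = set xs"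
  define S where "S = {P \<in> Ut \<kappa> xs. (\<Sum>f\<in>idx X \<kappa>. P f) = 1}"
  define V0 where "V0 = {P \<in> Ut \<kappa> xs. (\<Sum>f\<in>idx X \<kappa>. P f) = 0}"
  define N where "N = card (idx X \<kappa>)"
  have finX: "finite X" by (simp add: X_def)
  have N0: "N > 0" unfolding N_def card_idx[OF finX] using k by simp
  define U where "U = (\<lambda>f. if f \<in> idx X \<kappa> then 1 / real N else 0)"
  have sU: "(\<Sum>f\<in>idx X \<kappa>. U f) = 1" using N0 by (simp add: U_def N_def)
  have UU: "U \<in> Ut \<kappa> xs"
    unfolding Ut_def condU_def
  proof (intro CollectI conjI allI impI)
    show "is_tensor (set xs) \<kappa> U" by (simp add: U_def is_tensor_def X_def)
    fix k us a b assume t: "take k xs = us @ [a, b]"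
    let ?Y = "set (take k xs)"
    have ab: "a \<in> ?Y" "b \<in> ?Y" using t by auto
    have Y: "?Y \<subseteq> set xs" by (rule set_take_subset)
    have inv: "\<And>f. f \<in> idx (set xs) \<kappa> \<Longrightarrow> U (f \<circ> tr a b) = U f"
    proof -
      fix f assume f: "f \<in> idx (set xs) \<kappa>"
      have "f \<circ> tr a b \<in> idx (set xs) \<kappa>" using tr_idx[OF _ _ f, of a b] ab Y by auto
      then show "U (f \<circ> tr a b) = U f" using f by (simp add: U_def X_def)
    qed
    show "sym_in \<kappa> (marg (set xs) \<kappa> U ?Y) a b ?Y"
      unfolding sym_in_def using marg_sym[of a ?Y b "set xs" _ \<kappa> U, OF ab Y _ inv] by blast
  qed
  obtain f0 where f0: "f0 \<in> idx X \<kappa>" using N0 unfolding N_def by (metis card.empty ex_in_conv less_irrefl)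
  have U0: "U \<noteq> 0" using f0 N0 by (auto simp: U_def fun_eq_iff dest!: spec[of _ f0])
  define M where "M = (\<lambda>P (f :: 'a \<Rightarrow> nat). (\<Sum>g\<in>idx X \<kappa>. P g) * U f)"
  define W where "W = {(\<lambda>f. c * U f) | c. True}"
  define T where "T = delta ` idx X \<kappa>"
  have finT: "finite T" using fin_idx[OF finX] T_def by auto
  have tX: "{P. is_tensor X \<kappa> P} \<subseteq> VS.span T" unfolding T_def
    by (rule tens_span) (use fin_idx finX in auto)
  have UT: "Ut \<kappa> xs \<subseteq> VS.span T" using tX by (auto simp: Ut_def X_def)
  have WT: "W \<subseteq> VS.span T" using UT Ut_scale[OF UU] W_def by auto
  have Mh: "module_hom (\<lambda>(c::real) (P :: ('a \<Rightarrow> nat) \<Rightarrow> real). (\<lambda>f. c * P f))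
   (\<lambda>(c::real) (P :: ('a \<Rightarrow> nat) \<Rightarrow> real). (\<lambda>f. c * P f)) M"
    unfolding M_def by (simp add: module_hom_iff VS.module_axioms fun_eq_iff sum.distrib
        sum_distrib_left algebra_simps)
  have ih: "module_hom (\<lambda>(c::real) (P :: ('a \<Rightarrow> nat) \<Rightarrow> real). (\<lambda>f. c * P f))
   (\<lambda>(c::real) (P :: ('a \<Rightarrow> nat) \<Rightarrow> real). (\<lambda>f. c * P f)) id"
    by (simp add: module_hom_iff VS.module_axioms)
  have d: "VS.dim (Ut \<kappa> xs) = VS.dim W + VS.dim {v \<in> Ut \<kappa> xs. M v = 0}"
  proof (rule VS.split_dim[OF finT UT WT Ut_diff Mh ih])
    show "\<And>v. v \<in> Ut \<kappa> xs \<Longrightarrow> M v \<in> W" by (auto simp: M_def W_def)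
    show "\<And>w. w \<in> W \<Longrightarrow> id w \<in> Ut \<kappa> xs" using Ut_scale[OF UU] by (auto simp: W_def)
    show "\<And>w. w \<in> W \<Longrightarrow> M (id w) = w"
      by (auto simp: W_def M_def sum_distrib_left[symmetric] sU)
  qed
  have dW: "VS.dim W = 1"
  proof (rule VS.dim_unique[of "{U}"])
    show "{U} \<subseteq> W" unfolding W_def by (auto intro: exI[of _ 1])
    show "W \<subseteq> VS.span {U}" unfolding W_def by (auto intro: VS.span_scale VS.span_base)
    show "VS.independent {U}" using U0 VS.dependent_single by simp
  qed simp
  have K: "{v \<in> Ut \<kappa> xs. M v = 0} = V0"
  proof -
    have "\<And>v. M v = 0 \<longleftrightarrow> (\<Sum>g\<in>idx X \<kappa>. v g) = 0"
      using U0 by (auto simp: M_def fun_eq_iff)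
    then show ?thesis by (auto simp: V0_def)
  qed
  have D: "{P - Q | P Q. P \<in> S \<and> Q \<in> S} = V0"
  proof (intro set_eqI iffI)
    fix x assume "x \<in> {P - Q | P Q. P \<in> S \<and> Q \<in> S}"
    then obtain P Q where "x = P - Q" "P \<in> S" "Q \<in> S" by auto
    then show "x \<in> V0" using Ut_diff by (auto simp: S_def V0_def sum_subtractf)
  next
    fix x assume x: "x \<in> V0"
    have "x + U \<in> S" using x Ut_add[OF _ UU] sU by (auto simp: S_def V0_def sum.distrib)
    moreover have "U \<in> S" using UU sU by (simp add: S_def)
    moreover have "x = (x + U) - U" by simp
    ultimately show "x \<in> {P - Q | P Q. P \<in> S \<and> Q \<in> S}" by blast
  qed
  show ?thesis unfolding affine_dimension_def using D d dW K S_def X_def by simp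
qed

fun cl :: "'a rtree \<Rightarrow> 'a list" where
  "cl (Leaf x) = [x]"
| "cl (Node (Leaf x) r) = x # cl r"
| "cl (Node l r) = (case r of Leaf x \<Rightarrow> x # cl l | Node _ _ \<Rightarrow> cl l @ cl r)"

definition pairs :: "'a list \<Rightarrow> 'a set set" where
  "pairs L = (case rev L of b # a # _ \<Rightarrow> {{a, b}} | _ \<Rightarrow> {})"

definition eqv :: "'a list \<Rightarrow> 'a list \<Rightarrow> bool" where
  "eqv L L' \<longleftrightarrow> L = L' \<or> (\<exists>us a b. L = us @ [a, b] \<and> L' = us @ [b, a])"

lemma pairs_Nil[simp]: "pairs [] = {}" by (simp add: pairs_def)
lemma pairs_single[simp]: "pairs [x] = {}" by (simp add: pairs_def)
lemma pairs_two[simp]: "pairs [x, y] = {{x, y}}" by (simp add: pairs_def)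
lemma pairs_snoc2: "pairs (us @ [a, b]) = {{a, b}}" by (simp add: pairs_def)

lemma pairs_char: "C \<in> pairs L \<longleftrightarrow> (\<exists>us a b. L = us @ [a, b] \<and> C = {a, b})"
proof
  assume "C \<in> pairs L"
  then obtain b a r where "rev L = b # a # r" "C = {a, b}" unfolding pairs_def
    by (auto split: list.splits)
  then have "L = rev r @ [a, b]" by (metis append.assoc append_Cons append_Nil rev.simps(2) rev_rev_ident)
  then show "\<exists>us a b. L = us @ [a, b] \<and> C = {a, b}" using \<open>C = {a, b}\<close> by blast
next
  assume "\<exists>us a b. L = us @ [a, b] \<and> C = {a, b}"
  then show "C \<in> pairs L" using pairs_snoc2 by fastforce
qed

lemma len2_snoc: assumes "length L \<ge> 2" obtains us a b where "L = us @ [a, b]"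
proof -
  have "length (rev L) \<ge> 2" using assms by simp
  then obtain b a r where "rev L = b # a # r"
    by (metis Suc_le_length_iff numeral_2_eq_2)
  then have "L = rev r @ [a, b]" by (metis append.assoc append_Cons append_Nil rev.simps(2) rev_rev_ident)
  then show ?thesis using that by blast
qed

lemma pairs_Cons: "length L \<ge> 2 \<Longrightarrow> pairs (x # L) = pairs L"
  by (metis len2_snoc append_Cons pairs_snoc2)

lemma eqv_refl[simp]: "eqv L L" by (simp add: eqv_def)
lemma eqv_sym: "eqv L L' \<Longrightarrow> eqv L' L" unfolding eqv_def by blast
lemma eqv_Cons: "eqv L L' \<Longrightarrow> eqv (x # L) (x # L')"
  unfolding eqv_def by (metis append_Cons)
lemma eqv_trans: "eqv L1 L2 \<Longrightarrow> eqv L2 L3 \<Longrightarrow> eqv L1 L3"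
  unfolding eqv_def by auto
lemma eqv_pairs: "eqv L L' \<Longrightarrow> pairs L = pairs L'"
  unfolding eqv_def by (auto simp: pairs_snoc2 insert_commute)
lemma eqv_filter: "eqv L L' \<Longrightarrow> eqv (filter P L) (filter P L')"
  unfolding eqv_def by auto

lemma leaves_list_ne: "leaves_list T \<noteq> []"
  by (induction T) auto

lemma len_node: "length (leaves_list (Node a b)) \<ge> 2"
  using leaves_list_ne[of a] leaves_list_ne[of b] by (simp add: Suc_le_eq)
    (metis length_greater_0_conv add_pos_pos one_add_one Suc_leI add_mono_thms_linordered_semiring(1) One_nat_def)

lemma cl_leaves: "caterpillar T \<Longrightarrow> set (cl T) = leaves T \<and> length (cl T) = length (leaves_list T)"
proof (induction T)
  case (Leaf x) then show ?case by (simp add: leaves_def)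
next
  case (Node l r)
  show ?case
  proof (cases l)
    case (Leaf x) then show ?thesis using Node by (auto simp: leaves_def)
  next
    case (Node a b)
    then obtain x where r: "r = Leaf x" using Node.prems by (cases r) auto
    have "caterpillar l" using Node.prems by simp
    then have "set (cl l) = leaves l \<and> length (cl l) = length (leaves_list l)" using Node.IH(1) by blast
    then show ?thesis using r \<open>l = Node a b\<close> by (auto simp: leaves_def)
  qed
qed

lemma cl_node_r: "eqv (cl (Node l (Leaf x))) (x # cl l)"
  by (cases l) (auto simp: eqv_def)

lemma induced_filter:
  "(case induced T Y of None \<Rightarrow> filter (\<lambda>x. x \<in> Y) (leaves_list T) = []
     | Some T' \<Rightarrow> leaves_list T' = filter (\<lambda>x. x \<in> Y) (leaves_list T))"
proof (induction T)
  case (Leaf x) then show ?case by simp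
next
  case (Node l r)
  then show ?case by (auto split: option.splits)
qed

lemma induced_None: "caterpillar T \<Longrightarrow> induced T Y = None \<Longrightarrow> filter (\<lambda>x. x \<in> Y) (cl T) = []"
  using induced_filter[where T=T and Y=Y] cl_leaves[of T] by (auto simp: filter_empty_conv leaves_def)

lemma induced_cat:
  "caterpillar T \<Longrightarrow> induced T Y = Some T' \<Longrightarrow> caterpillar T' \<and> eqv (cl T') (filter (\<lambda>x. x \<in> Y) (cl T))"
proof (induction T arbitrary: T')
  case (Leaf x) then show ?case by (auto split: if_splits)
next
  case (Node l r)
  show ?case
  proof (cases l)
    case (Leaf x)
    have cr: "caterpillar r" using Node.prems by simp
    show ?thesis
    proof (cases "induced r Y")
      case None
      then have "filter (\<lambda>x. x \<in> Y) (cl r) = []" using induced_None cr by blast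
      then show ?thesis using Node.prems Leaf None by (auto split: if_splits)
    next
      case (Some r')
      have ih: "caterpillar r' \<and> eqv (cl r') (filter (\<lambda>x. x \<in> Y) (cl r))" using Node.IH(2)[OF cr Some] .
      show ?thesis
      proof (cases "x \<in> Y")
        case True
        then have "T' = Node (Leaf x) r'" using Node.prems Leaf Some by simp
        then show ?thesis using ih True Leaf eqv_Cons by auto
      next
        case False
        then have "T' = r'" using Node.prems Leaf Some by simp
        then show ?thesis using ih False Leaf by auto
      qed
    qed
  next
    case (Node a b)
    then obtain x where r: "r = Leaf x" using Node.prems by (cases r) auto
    have cl': "caterpillar l" using Node.prems by simp
    have clT: "cl (Node l r) = x # cl l" using r \<open>l = Node a b\<close> by simp
    show ?thesis
    proof (cases "induced l Y")
      case None
      then have "filter (\<lambda>x. x \<in> Y) (cl l) = []" using induced_None cl' by blast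
      then show ?thesis using Node.prems r None clT by (auto split: if_splits)
    next
      case (Some l')
      have ih: "caterpillar l' \<and> eqv (cl l') (filter (\<lambda>x. x \<in> Y) (cl l))" using Node.IH(1)[OF cl' Some] .
      show ?thesis
      proof (cases "x \<in> Y")
        case True
        then have T': "T' = Node l' (Leaf x)" using Node.prems r Some by simp
        have "eqv (cl T') (x # cl l')" using cl_node_r T' by simp
        moreover have "eqv (x # cl l') (filter (\<lambda>x. x \<in> Y) (cl (Node l r)))"
          using eqv_Cons[OF conjunct2[OF ih]] True clT by simp
        ultimately show ?thesis using ih T' eqv_trans by fastforce
      next
        case False
        then have "T' = l'" using Node.prems r Some by simp
        then show ?thesis using ih False clT by auto
      qed
    qed
  qed
qed

lemma tc_node: "two_clades (Node l r) =
   (if card (leaves (Node l r)) = 2 then {leaves (Node l r)} else {}) \<union> two_clades l \<union> two_clades r"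
  unfolding two_clades_def by auto

lemma tc_cat: "caterpillar T \<Longrightarrow> valid_tree T \<Longrightarrow> two_clades T = pairs (cl T)"
proof (induction T)
  case (Leaf x) then show ?case by (auto simp: two_clades_def leaves_def)
next
  case (Node l r)
  have vl: "valid_tree l" "valid_tree r" using Node.prems by (auto simp: valid_tree_def)
  have card: "card (leaves (Node l r)) = length (cl (Node l r))"
    using cl_leaves[OF Node.prems(1)] Node.prems(2) by (simp add: valid_tree_def leaves_def distinct_card card_Un_disjoint)
  have lv: "leaves (Node l r) = set (cl (Node l r))" using cl_leaves[OF Node.prems(1)] by simp
  show ?case
  proof (cases l)
    case (Leaf x)
    have cr: "caterpillar r" using Node.prems by simp
    have ih: "two_clades r = pairs (cl r)" using Node.IH(2)[OF cr vl(2)] .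
    have tl: "two_clades l = {}" using Leaf by (simp add: two_clades_def leaves_def)
    show ?thesis
    proof (cases r)
      case (Leaf y)
      then show ?thesis using tl ih card lv \<open>l = Leaf x\<close> by (simp add: tc_node)
    next
      case (Node c d)
      have "length (cl r) \<ge> 2" using cl_leaves[OF cr] len_node Node by metis
      then show ?thesis using tl ih card \<open>l = Leaf x\<close> pairs_Cons[of "cl r" x] by (simp add: tc_node)
    qed
  next
    case (Node a b)
    then obtain x where r: "r = Leaf x" using Node.prems by (cases r) auto
    have cl': "caterpillar l" using Node.prems by simp
    have ih: "two_clades l = pairs (cl l)" using Node.IH(1)[OF cl' vl(1)] .
    have tr: "two_clades r = {}" using r by (simp add: two_clades_def leaves_def)
    have clT: "cl (Node l r) = x # cl l" using r \<open>l = Node a b\<close> by simp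
    have "length (cl l) \<ge> 2" using cl_leaves[OF cl'] len_node Node by metis
    then show ?thesis using tr ih card clT pairs_Cons[of "cl l" x] by (simp add: tc_node)
  qed
qed

lemma tci: "caterpillar T \<Longrightarrow> valid_tree T \<Longrightarrow> two_clades_induced T Y = pairs (filter (\<lambda>x. x \<in> Y) (cl T))"
proof (cases "induced T Y")
  case None
  assume "caterpillar T"
  then have "filter (\<lambda>x. x \<in> Y) (cl T) = []" using induced_None None by blast
  then show ?thesis using None by (simp add: two_clades_induced_def)
next
  case (Some T')
  assume c: "caterpillar T" and v: "valid_tree T"
  have i: "caterpillar T' \<and> eqv (cl T') (filter (\<lambda>x. x \<in> Y) (cl T))" using induced_cat[OF c Some] .
  have "leaves_list T' = filter (\<lambda>x. x \<in> Y) (leaves_list T)" using induced_filter[where T=T and Y=Y] Some by simp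
  then have vT': "valid_tree T'" using v by (simp add: valid_tree_def)
  show ?thesis using tc_cat[OF conjunct1[OF i] vT'] eqv_pairs[OF conjunct2[OF i]] Some
    by (simp add: two_clades_induced_def)
qed

lemma sym_in_swap: "sym_in \<kappa> Q a b Y \<longleftrightarrow> sym_in \<kappa> Q b a Y"
  by (cases "a = b") (simp_all add: sym_in_def fun_upd_twist)

lemma condV_alt:
  assumes "distinct xs"
  shows "condV \<kappa> xs P \<longleftrightarrow> (\<forall>Y\<subseteq>set xs. \<forall>C\<in>pairs (filter (\<lambda>x. x \<in> Y) xs). \<forall>a b. C = {a, b} \<longrightarrow>
      sym_in \<kappa> (marg (set xs) \<kappa> P Y) a b Y)"
proof
  assume cV: "condV \<kappa> xs P"
  show "\<forall>Y\<subseteq>set xs. \<forall>C\<in>pairs (filter (\<lambda>x. x \<in> Y) xs). \<forall>a b. C = {a, b} \<longrightarrow>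
      sym_in \<kappa> (marg (set xs) \<kappa> P Y) a b Y"
  proof (intro allI impI ballI)
    fix Y C a b assume Y: "Y \<subseteq> set xs" and C: "C \<in> pairs (filter (\<lambda>x. x \<in> Y) xs)" and ab: "C = {a, b}"
    obtain us a0 b0 where F: "filter (\<lambda>x. x \<in> Y) xs = us @ [a0, b0]" and C0: "C = {a0, b0}"
      using C pairs_char by metis
    have "distinct (us @ [a0, b0])" using F assms by (metis distinct_filter)
    then have "a0 \<noteq> b0" by simp
    have s0: "sym_in \<kappa> (marg (set xs) \<kappa> P Y) a0 b0 Y" using cV Y F unfolding condV_def by blast
    have "(a = a0 \<and> b = b0) \<or> (a = b0 \<and> b = a0)" using ab C0 \<open>a0 \<noteq> b0\<close> by (auto simp: doubleton_eq_iff)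
    then show "sym_in \<kappa> (marg (set xs) \<kappa> P Y) a b Y" using s0 sym_in_swap by metis
  qed
next
  assume H: "\<forall>Y\<subseteq>set xs. \<forall>C\<in>pairs (filter (\<lambda>x. x \<in> Y) xs). \<forall>a b. C = {a, b} \<longrightarrow>
      sym_in \<kappa> (marg (set xs) \<kappa> P Y) a b Y"
  show "condV \<kappa> xs P" unfolding condV_def
  proof (intro allI impI)
    fix Y us a b assume "Y \<subseteq> set xs" "filter (\<lambda>x. x \<in> Y) xs = us @ [a, b]"
    then show "sym_in \<kappa> (marg (set xs) \<kappa> P Y) a b Y" using H pairs_char by metis
  qed
qed

theorem corollary4p3:
  fixes T :: "'a rtree" and \<kappa> n :: nat
  assumes "\<kappa> \<ge> 2"
    and "valid_tree T"
    and "caterpillar T"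
    and "card (leaves T) = n"
    and "n \<ge> 1"
  shows "real (d_kappa \<kappa> T) = (real \<kappa> ^ n + real \<kappa>) / 2 - 1"
proof -
  define xs where "xs = cl T"
  have sl: "set xs = leaves T" and ll: "length xs = length (leaves_list T)"
    using cl_leaves[OF assms(3)] xs_def by auto
  have dl: "distinct (leaves_list T)" using assms(2) by (simp add: valid_tree_def)
  have len: "length xs = n" using ll assms(4) dl by (simp add: leaves_def distinct_card)
  have dist: "distinct xs" using card_distinct[of xs] sl len assms(4) by simp
  have ne: "xs \<noteq> []" using len assms(5) by auto
  have UE: "UE_model \<kappa> T = {P \<in> Ut \<kappa> xs. (\<Sum>f\<in>idx (set xs) \<kappa>. P f) = 1}"
  proof (intro set_eqI)
    fix P
    show "P \<in> UE_model \<kappa> T \<longleftrightarrow> P \<in> {P \<in> Ut \<kappa> xs. (\<Sum>f\<in>idx (set xs) \<kappa>. P f) = 1}"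
    proof (cases "is_tensor (set xs) \<kappa> P")
      case False then show ?thesis by (simp add: UE_model_def Ut_def sl)
    next
      case True
      have "condU \<kappa> xs P \<longleftrightarrow> condV \<kappa> xs P" using condU_iff_condV[OF dist True] .
      also have "\<dots> \<longleftrightarrow> (\<forall>Y\<subseteq>set xs. \<forall>C\<in>pairs (filter (\<lambda>x. x \<in> Y) xs). \<forall>a b. C = {a, b} \<longrightarrow>
         sym_in \<kappa> (marg (set xs) \<kappa> P Y) a b Y)" using condV_alt[OF dist] .
      finally show ?thesis using True
        by (simp add: UE_model_def Ut_def sl tci[OF assms(3,2)] sym_in_def xs_def[symmetric]) blast
    qed
  qed
  have a: "d_kappa \<kappa> T + 1 = VS.dim (Ut \<kappa> xs)"
    unfolding d_kappa_def UE using affine_Ut[OF dist ne] assms(1) by simp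
  have b: "2 * VS.dim (Ut \<kappa> xs) = \<kappa> ^ n + \<kappa>" using dim_Ut[OF dist ne] len by simp
  have "2 * (d_kappa \<kappa> T + 1) = \<kappa> ^ n + \<kappa>" using a b by simp
  then have "2 * (real (d_kappa \<kappa> T) + 1) = real \<kappa> ^ n + real \<kappa>"
    by (metis of_nat_1 of_nat_add of_nat_mult of_nat_numeral of_nat_power)
  then show ?thesis by (simp add: field_simps)
qed

end
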